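(* Let $R$ be a commutative Artinian ring and let $M$ be a non-zero $R$-module which is PS-hollow representable. Suppose that for every PS-hollow submodule $N$ of $M$, the submodule $In(N)$ is a PS-hollow submodule of $M$. Then $M$ has a minimal PS-hollow representation.
   Context: All rings are commutative with unity. An $R$-submodule $N\leq M$ is PS-hollow (pseudo strongly hollow) iff for every ideal $I\leq R$ and every submodule $L\leq M$: $N\subseteq IM+L$ implies $N\subseteq IM$ or $N\subseteq L$. For a PS-hollow $N\leq M$ put $A_N=\{I\leq R \text{ ideal}: N\subseteq IM\}$, $H_N$ the set of minimal elements of $A_N$ (w.r.t. inclusion), and $In(N)=\bigcap_{I\in H_N} IM$ (with $In(N)=M$ if $H_N=\emptyset$). For a set $H$ of ideals, $N$ is $H$-PS-hollow iff $N$ is PS-hollow and $H_N=H$. $M$ is PS-hollow representable iff $M$ is a finite sum of PS-hollow submodules. A minimal PS-hollow representation of $M$ is an expression $M=\sum_{i=1}^n N_i$ where each $N_i$ is $H_i$-PS-hollow (for some $H_i$), such that (1) $In(N_1),\dots,In(N_n)$ are pairwise incomparable (w.r.t. inclusion) and (2) $N_j\not\subseteq\sum_{i\neq j}N_i$ for every $j$. *)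

theory Defs
  imports "HOL-Algebra.Module" "HOL-Algebra.Ideal"
begin

definition artinian_cring :: "('a, 'c) ring_scheme \<Rightarrow> bool" where
  "artinian_cring R \<longleftrightarrow> cring R \<and>
     (\<forall>f :: nat \<Rightarrow> 'a set. (\<forall>n. ideal (f n) R \<and> f (Suc n) \<subseteq> f n)
          \<longrightarrow> (\<exists>k. \<forall>n\<ge>k. f n = f k))"

definition gen_submodule :: "('a, 'c) ring_scheme \<Rightarrow> ('a, 'b, 'd) module_scheme \<Rightarrow> 'b set \<Rightarrow> 'b set" where
  "gen_submodule R M S = \<Inter>{L. submodule L R M \<and> S \<subseteq> L}"

definition ideal_smult :: "('a, 'c) ring_scheme \<Rightarrow> ('a, 'b, 'd) module_scheme \<Rightarrow> 'a set \<Rightarrow> 'b set" where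
  "ideal_smult R M I = gen_submodule R M {a \<odot>\<^bsub>M\<^esub> m | a m. a \<in> I \<and> m \<in> carrier M}"

definition PS_hollow :: "('a, 'c) ring_scheme \<Rightarrow> ('a, 'b, 'd) module_scheme \<Rightarrow> 'b set \<Rightarrow> bool" where
  "PS_hollow R M N \<longleftrightarrow> submodule N R M \<and>
     (\<forall>I L. ideal I R \<longrightarrow> submodule L R M \<longrightarrow>
        N \<subseteq> gen_submodule R M (ideal_smult R M I \<union> L) \<longrightarrow>
        N \<subseteq> ideal_smult R M I \<or> N \<subseteq> L)"

definition A_set :: "('a, 'c) ring_scheme \<Rightarrow> ('a, 'b, 'd) module_scheme \<Rightarrow> 'b set \<Rightarrow> 'a set set" where
  "A_set R M N = {I. ideal I R \<and> N \<subseteq> ideal_smult R M I}"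

definition H_set :: "('a, 'c) ring_scheme \<Rightarrow> ('a, 'b, 'd) module_scheme \<Rightarrow> 'b set \<Rightarrow> 'a set set" where
  "H_set R M N = {I \<in> A_set R M N. \<forall>J \<in> A_set R M N. J \<subseteq> I \<longrightarrow> J = I}"

definition In_sub :: "('a, 'c) ring_scheme \<Rightarrow> ('a, 'b, 'd) module_scheme \<Rightarrow> 'b set \<Rightarrow> 'b set" where
  "In_sub R M N = carrier M \<inter> (\<Inter>I \<in> H_set R M N. ideal_smult R M I)"

definition H_PS_hollow :: "('a, 'c) ring_scheme \<Rightarrow> ('a, 'b, 'd) module_scheme \<Rightarrow> 'a set set \<Rightarrow> 'b set \<Rightarrow> bool" where
  "H_PS_hollow R M H N \<longleftrightarrow> PS_hollow R M N \<and> H_set R M N = H"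

definition PS_hollow_representable :: "('a, 'c) ring_scheme \<Rightarrow> ('a, 'b, 'd) module_scheme \<Rightarrow> bool" where
  "PS_hollow_representable R M \<longleftrightarrow>
     (\<exists>(n::nat) (N :: nat \<Rightarrow> 'b set). (\<forall>i<n. PS_hollow R M (N i)) \<and>
        carrier M = gen_submodule R M (\<Union>i<n. N i))"

definition minimal_PS_hollow_rep ::
  "('a, 'c) ring_scheme \<Rightarrow> ('a, 'b, 'd) module_scheme \<Rightarrow> nat \<Rightarrow> (nat \<Rightarrow> 'b set) \<Rightarrow> bool" where
  "minimal_PS_hollow_rep R M n N \<longleftrightarrow>
     carrier M = gen_submodule R M (\<Union>i<n. N i) \<and>
     (\<forall>i<n. \<exists>H. H_PS_hollow R M H (N i)) \<and>
     (\<forall>i<n. \<forall>j<n. i \<noteq> j \<longrightarrow> \<not> In_sub R M (N i) \<subseteq> In_sub R M (N j)) \<and>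
     (\<forall>j<n. \<not> N j \<subseteq> gen_submodule R M (\<Union>i\<in>{..<n} - {j}. N i))"

end

theory Submission
  imports Defs
begin

lemma sub_carrier: "submodule N R M \<Longrightarrow> N \<subseteq> carrier M"
  using submodule.axioms(1) subgroup.subset by fastforce

lemma gen_mono: "A \<subseteq> B \<Longrightarrow> gen_submodule R M A \<subseteq> gen_submodule R M B"
  unfolding gen_submodule_def by blast

lemma gen_carrier: "module R M \<Longrightarrow> S \<subseteq> carrier M \<Longrightarrow> gen_submodule R M S \<subseteq> carrier M"
  unfolding gen_submodule_def using module.carrier_is_submodule[of R M]
  by blast

lemma gen_absorb: "B \<subseteq> gen_submodule R M A \<Longrightarrow> gen_submodule R M (A \<union> B) \<subseteq> gen_submodule R M A"
  unfolding gen_submodule_def by blast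

lemma N_In: "N \<subseteq> carrier M \<Longrightarrow> N \<subseteq> In_sub R M N"
  unfolding In_sub_def H_set_def A_set_def by blast

lemma In_In: assumes "N \<subseteq> carrier M" shows "In_sub R M (In_sub R M N) \<subseteq> In_sub R M N"
proof -
  have NI: "N \<subseteq> In_sub R M N" using N_In assms .
  have "H_set R M N \<subseteq> H_set R M (In_sub R M N)"
  proof
    fix I assume I: "I \<in> H_set R M N"
    have "I \<in> A_set R M (In_sub R M N)"
      using I unfolding H_set_def A_set_def In_sub_def by blast
    moreover have "\<forall>J \<in> A_set R M (In_sub R M N). J \<subseteq> I \<longrightarrow> J = I"
      using I NI unfolding H_set_def A_set_def by blast
    ultimately show "I \<in> H_set R M (In_sub R M N)" unfolding H_set_def by blast
  qed
  then show ?thesis unfolding In_sub_def[of R M "In_sub R M N"] 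
    by (smt (verit, ccfv_threshold) INT_iff In_sub_def IntE IntI subset_iff)
qed

definition good where "good R M Q \<longleftrightarrow> PS_hollow R M Q \<and> In_sub R M Q \<subseteq> Q"

theorem mainTheorem1:
  fixes R :: "'a ring" and M :: "('a, 'b) module"
  assumes "artinian_cring R"
    and "module R M"
    and "carrier M \<noteq> {\<zero>\<^bsub>M\<^esub>}"
    and "PS_hollow_representable R M"
    and "\<And>N. PS_hollow R M N \<Longrightarrow> PS_hollow R M (In_sub R M N)"
  shows "\<exists>n N. minimal_PS_hollow_rep R M n N"
proof -
  obtain n :: nat and N where N: "\<forall>i<n. PS_hollow R M (N i)" "carrier M = gen_submodule R M (\<Union>i<n. N i)"
    using assms(4) unfolding PS_hollow_representable_def by (elim exE conjE) blast
  define P where "P i = In_sub R M (N i)" for i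
  have Nc: "N i \<subseteq> carrier M" if "i < n" for i
    using N(1) that unfolding PS_hollow_def by (intro sub_carrier) blast
  have gP: "good R M (P i)" if "i < n" for i
    unfolding good_def P_def using assms(5)[OF N(1)[rule_format, OF that]] In_In[OF Nc[OF that]] by simp
  have "gen_submodule R M (\<Union>i<n. N i) \<subseteq> gen_submodule R M (\<Union>i<n. P i)"
  proof (rule gen_mono, rule UN_mono)
    fix i assume "i \<in> {..<n}" then have "i < n" by simp
    then show "N i \<subseteq> P i" unfolding P_def by (rule N_In[OF Nc])
  qed simp
  moreover have "gen_submodule R M (\<Union>i<n. P i) \<subseteq> carrier M"
    by (rule gen_carrier[OF assms(2)], rule UN_least) (simp add: P_def In_sub_def Int_lower1)
  ultimately have "carrier M = gen_submodule R M (\<Union>i<n. P i)" using N(2) by blast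
  with gP have ex: "\<exists>Q. (\<forall>i<n. good R M (Q i)) \<and> carrier M = gen_submodule R M (\<Union>i<n. Q i)"
    by blast
  define m where "m = (LEAST m::nat. \<exists>Q. (\<forall>i<m. good R M (Q i)) \<and> carrier M = gen_submodule R M (\<Union>i<m. Q i))"
  obtain Q where Q: "\<forall>i<m. good R M (Q i)" "carrier M = gen_submodule R M (\<Union>i<m. Q i)"
  proof -
    have "\<exists>m::nat. \<exists>Q. (\<forall>i<m. good R M (Q i)) \<and> carrier M = gen_submodule R M (\<Union>i<m. Q i)"
      using ex by blast
    then have "\<exists>Q. (\<forall>i<m. good R M (Q i)) \<and> carrier M = gen_submodule R M (\<Union>i<m. Q i)"
      unfolding m_def by (rule LeastI_ex)
    then show ?thesis using that by blast
  qed
  have Qc: "Q i \<subseteq> carrier M" if "i < m" for i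
    using Q(1) that unfolding good_def PS_hollow_def by (intro sub_carrier) blast
  have red: "\<not> Q j \<subseteq> gen_submodule R M (\<Union>i\<in>{..<m} - {j}. Q i)" if j: "j < m" for j
  proof
    assume a: "Q j \<subseteq> gen_submodule R M (\<Union>i\<in>{..<m} - {j}. Q i)"
    define U where "U = (\<Union>i\<in>{..<m} - {j}. Q i)"
    have e: "(\<Union>i<m. Q i) = U \<union> Q j" unfolding U_def using j by auto
    have "Q j \<subseteq> gen_submodule R M U" using a unfolding U_def .
    then have "gen_submodule R M (U \<union> Q j) \<subseteq> gen_submodule R M U" by (rule gen_absorb)
    then have "carrier M \<subseteq> gen_submodule R M U" using Q(2) e by metis
    moreover have "gen_submodule R M U \<subseteq> carrier M"
      unfolding U_def by (rule gen_carrier[OF assms(2)], rule UN_least, rule Qc) simp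
    ultimately have cU: "carrier M = gen_submodule R M U" by blast
    define Q' where "Q' k = Q (if k < j then k else Suc k)" for k
    have "(\<Union>k<m-1. Q' k) = U"
    proof
      show "(\<Union>k<m-1. Q' k) \<subseteq> U"
      proof
        fix x assume "x \<in> (\<Union>k<m-1. Q' k)"
        then obtain k where k: "k < m - 1" "x \<in> Q' k" by blast
        show "x \<in> U"
        proof (cases "k < j")
          case True then show ?thesis using k j unfolding U_def Q'_def by auto
        next
          case False
          then have "Suc k \<in> {..<m} - {j}" using k by auto
          then show ?thesis using k False unfolding U_def Q'_def by auto
        qed
      qed
      show "U \<subseteq> (\<Union>k<m-1. Q' k)"
      proof
        fix x assume "x \<in> U"
        then obtain i where i: "i < m" "i \<noteq> j" "x \<in> Q i" unfolding U_def by blast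
        show "x \<in> (\<Union>k<m-1. Q' k)"
        proof (cases "i < j")
          case True then show ?thesis using i j unfolding Q'_def by (intro UN_I[of i]) auto
        next
          case False then show ?thesis using i j unfolding Q'_def by (intro UN_I[of "i - 1"]) auto
        qed
      qed
    qed
    moreover have "\<forall>k<m-1. good R M (Q' k)" using Q(1) unfolding Q'_def by auto
    ultimately have "\<exists>Q. (\<forall>i<m-1. good R M (Q i)) \<and> carrier M = gen_submodule R M (\<Union>i<m-1. Q i)"
      using cU by metis
    then have "m \<le> m - 1" unfolding m_def by (rule Least_le)
    then show False using j by simp
  qed
  have "minimal_PS_hollow_rep R M m Q"
    unfolding minimal_PS_hollow_rep_def H_PS_hollow_def
  proof (intro conjI allI impI)
    show "carrier M = gen_submodule R M (\<Union>i<m. Q i)" by (rule Q(2))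
  next
    fix i assume "i < m" show "\<exists>H. PS_hollow R M (Q i) \<and> H_set R M (Q i) = H"
    proof -
      have "good R M (Q i)" using Q(1) \<open>i < m\<close> by blast
      then have "PS_hollow R M (Q i)" unfolding good_def by (rule conjunct1)
      then show ?thesis by blast
    qed
  next
    fix j assume "j < m" then show "\<not> Q j \<subseteq> gen_submodule R M (\<Union>i\<in>{..<m} - {j}. Q i)" by (rule red)
  next
    fix i j assume ij: "i < m" "j < m" "i \<noteq> j"
    show "\<not> In_sub R M (Q i) \<subseteq> In_sub R M (Q j)"
    proof
      assume a: "In_sub R M (Q i) \<subseteq> In_sub R M (Q j)"
      have "Q i \<subseteq> In_sub R M (Q i)" by (rule N_In[OF Qc[OF ij(1)]])
      also have "\<dots> \<subseteq> In_sub R M (Q j)" by (rule a)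
      also have "\<dots> \<subseteq> Q j" using Q(1) ij(2) unfolding good_def by simp
      also have "Q j \<subseteq> (\<Union>k\<in>{..<m} - {i}. Q k)" using ij by blast
      also have "\<dots> \<subseteq> gen_submodule R M (\<Union>k\<in>{..<m} - {i}. Q k)" unfolding gen_submodule_def by blast
      finally show False using red[OF ij(1)] by blast
    qed
  qed
  then show ?thesis by blast
qed

end
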